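(* Let $F$ be a finite field, let $f,g,q\in F[\lambda]$ with $f,g$ relatively prime and $q=\sum_{i=0}^m q_i\lambda^i$ monic and irreducible, and let $Q=\mathfrak p_q(g,f):=\sum_{i=0}^m q_i f^i g^{m-i}$, assumed nonzero. Let $L$ be the splitting field of $q$ over $F$ and $\alpha\in L$ a root of $q$. Then $Q$ is irreducible over $F$ if and only if $f-\alpha g$ is irreducible over $L$.
   Context: $\mathfrak p_q(g,f)=g^{\deg q}q(f/g)$. *)

theory Defs
  imports "HOL-Computational_Algebra.Computational_Algebra"
begin

definition frak_p :: "'a::comm_ring_1 poly \<Rightarrow> 'a poly \<Rightarrow> 'a poly \<Rightarrow> 'a poly" where
  "frak_p q g f = (\<Sum>i\<le>degree q. smult (coeff q i) (f ^ i * g ^ (degree q - i)))"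

definition field_embedding :: "('a::field \<Rightarrow> 'b::field) \<Rightarrow> bool" where
  "field_embedding \<phi> \<longleftrightarrow> \<phi> 1 = 1 \<and> (\<forall>x y. \<phi> (x + y) = \<phi> x + \<phi> y) \<and> (\<forall>x y. \<phi> (x * y) = \<phi> x * \<phi> y)"

definition is_subfield :: "'b::field set \<Rightarrow> bool" where
  "is_subfield K \<longleftrightarrow> 0 \<in> K \<and> 1 \<in> K \<and> (\<forall>x\<in>K. \<forall>y\<in>K. x + y \<in> K \<and> x * y \<in> K)
     \<and> (\<forall>x\<in>K. - x \<in> K \<and> inverse x \<in> K)"

definition is_splitting_field :: "('a::field \<Rightarrow> 'b::field) \<Rightarrow> 'a poly \<Rightarrow> bool" where
  "is_splitting_field \<phi> q \<longleftrightarrow> field_embedding \<phi> \<and>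
     (\<exists>c rs. map_poly \<phi> q = smult c (\<Prod>r\<leftarrow>rs. [:- r, 1:])) \<and>
     (\<forall>K. is_subfield K \<and> range \<phi> \<subseteq> K \<and> {x. poly (map_poly \<phi> q) x = 0} \<subseteq> K \<longrightarrow> K = UNIV)"

end

theory Submission
  imports Defs "Berlekamp_Zassenhaus.Finite_Field"
begin
hide_const (open) up_ring.coeff up_ring.monom module.smult

lemma pow_card_same:
  fixes x :: "'a::{field,finite}"
  shows "x ^ CARD('a) = x"
proof (cases "x = 0")
  case False
  have "x * (\<Prod>y\<in>UNIV-{0}. x * y) = x * x ^ (card (UNIV :: 'a set) - 1) * \<Prod>(UNIV-{0})"
    by (simp add: prod.distrib mult_ac)
  also have "x * x ^ (card (UNIV :: 'a set) - 1) = x ^ Suc (card (UNIV :: 'a set) - 1)"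
    by (subst power_Suc) auto
  also have "Suc (card (UNIV :: 'a set) - 1) = card (UNIV :: 'a set)"
    using finite_UNIV_card_ge_0[where ?'a = 'a] by simp
  also have "(\<Prod>y\<in>UNIV-{0}. x * y) = (\<Prod>y\<in>UNIV-{0}. y)"
    by (rule prod.reindex_bij_witness[of _ "\<lambda>y. y / x" "\<lambda>y. x * y"]) (use False in auto)
  finally show ?thesis
    by simp
qed (use finite_UNIV_card_ge_0[where ?'a = 'a] in auto)

lemma pow_card_pow_same:
  fixes x :: "'a::{field,finite}"
  shows "x ^ (CARD('a) ^ k) = x"
  by (induction k) (simp_all add: pow_card_same power_mult)

lemma freshman_poly:
  "([:1,1:] :: 'a::{field,finite} poly) ^ CARD('a) = [:0,1:] ^ CARD('a) + 1"
proof (rule poly_eqI_degree_lead_coeff[where A = UNIV and n = "CARD('a)"])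
  show "coeff ([:1,1:] ^ CARD('a)) CARD('a) = coeff (([:0,1:]::'a poly) ^ CARD('a) + 1) CARD('a)"
    using finite_UNIV_card_ge_0[where ?'a = 'a] by (simp add: coeff_linear_power)
  show "CARD('a) \<le> card (UNIV :: 'a set)" by simp
  show "degree (([:1,1:]::'a poly) ^ CARD('a)) \<le> CARD('a)" by (simp add: degree_linear_power)
  show "degree (([:0,1:]::'a poly) ^ CARD('a) + 1) \<le> CARD('a)"
    by (rule order.trans[OF degree_add_le_max]) (simp add: degree_linear_power)
  fix z :: 'a
  show "poly ([:1,1:] ^ CARD('a)) z = poly ([:0,1:] ^ CARD('a) + 1) z"
    by (simp add: pow_card_same add.commute)
qed


context
  fixes \<phi> :: "'a::{field,finite} \<Rightarrow> 'b::field"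
  assumes hom: "field_hom \<phi>"
begin

interpretation phi: field_hom \<phi> by (rule hom)
interpretation phip: map_poly_inj_idom_hom \<phi> ..

lemma card_pos: "CARD('a) > 0" by simp

lemma card_ge2: "CARD('a) \<ge> 2"
proof -
  have "card {0::'a, 1} \<le> CARD('a)" by (rule card_mono) auto
  thus ?thesis by simp
qed

lemma fr_add: "((x::'b) + y) ^ CARD('a) = x ^ CARD('a) + y ^ CARD('a)"
proof (cases "y = 0")
  case True then show ?thesis using card_pos by simp
next
  case False
  have "map_poly \<phi> ([:1,1:] ^ CARD('a)) = map_poly \<phi> ([:0,1:] ^ CARD('a) + 1)"
    by (simp only: freshman_poly)
  hence eq: "([:1,1:] :: 'b poly) ^ CARD('a) = [:0,1:] ^ CARD('a) + 1"
    by (simp add: hom_distribs)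
  have "(x/y + 1) ^ CARD('a) = (x/y) ^ CARD('a) + 1"
    using arg_cong[OF eq, of "\<lambda>P. poly P (x/y)"] by (simp add: add.commute)
  have "x + y = (x/y + 1) * y" using False by (simp add: field_simps)
  hence "(x + y) ^ CARD('a) = ((x/y + 1) * y) ^ CARD('a)" by simp
  also have "\<dots> = (x/y + 1) ^ CARD('a) * y ^ CARD('a)" by (simp add: power_mult_distrib)
  also have "\<dots> = ((x/y) ^ CARD('a) + 1) * y ^ CARD('a)" by (simp add: \<open>(x/y + 1) ^ CARD('a) = (x/y) ^ CARD('a) + 1\<close>)
  also have "\<dots> = (x/y * y) ^ CARD('a) + y ^ CARD('a)" by (simp only: distrib_right power_mult_distrib mult_1_left)
  also have "x/y * y = x" using False by simp
  finally show ?thesis .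
qed

lemma F_add: "((x::'b) + y) ^ (CARD('a) ^ k) = x ^ (CARD('a) ^ k) + y ^ (CARD('a) ^ k)"
proof (induction k)
  case (Suc k)
  have "(x + y) ^ (CARD('a) ^ Suc k) = ((x + y) ^ (CARD('a) ^ k)) ^ CARD('a)"
    by (simp only: power_Suc2 power_mult)
  also have "\<dots> = (x ^ (CARD('a) ^ k)) ^ CARD('a) + (y ^ (CARD('a) ^ k)) ^ CARD('a)"
    by (simp add: Suc fr_add)
  finally show ?case by (simp only: power_Suc2 power_mult)
qed simp

lemma F_hom: "field_hom (\<lambda>x::'b. x ^ (CARD('a) ^ k))"
  by unfold_locales (simp_all add: F_add power_mult_distrib)

lemma F_fix: "(\<phi> a) ^ (CARD('a) ^ k) = \<phi> a"
  by (simp add: pow_card_pow_same flip: phi.hom_power)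

lemma fixed_range:
  assumes "(x::'b) ^ CARD('a) = x"
  shows "x \<in> range \<phi>"
proof -
  define P :: "'b poly" where "P = [:0,1:] ^ CARD('a) - [:0,1:]"
  have degP: "degree P = CARD('a)"
    unfolding P_def diff_conv_add_uminus using card_ge2
    by (subst degree_add_eq_left) (auto simp: degree_linear_power)
  hence "P \<noteq> 0" using finite_UNIV_card_ge_0[where ?'a = 'a] by auto
  hence fin: "finite {x. poly P x = 0}" and cardle: "card {x. poly P x = 0} \<le> CARD('a)"
    using poly_roots_finite[OF \<open>P \<noteq> 0\<close>] card_poly_roots_bound[OF \<open>P \<noteq> 0\<close>] degP by auto
  have sub: "range \<phi> \<subseteq> {x. poly P x = 0}"
    unfolding P_def using F_fix[of _ 1] by auto
  have "card (range \<phi>) = CARD('a)"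
    using phi.injectivity by (simp add: card_image inj_def)
  hence "range \<phi> = {x. poly P x = 0}"
    using card_subset_eq[OF fin sub] cardle card_mono[OF fin sub] by linarith
  moreover have "x \<in> {x. poly P x = 0}" using assms unfolding P_def by simp
  ultimately show ?thesis by simp
qed

lemma lift_poly:
  assumes "\<And>i. coeff P i \<in> range \<phi>"
  shows "\<exists>P'. P = map_poly \<phi> P'"
proof -
  have i0: "inv_into UNIV \<phi> 0 = 0"
    by (metis phi.hom_zero phi.injectivity inv_f_f inj_def)
  have "map_poly \<phi> (map_poly (inv_into UNIV \<phi>) P) = P"
    by (rule poly_eqI) (simp add: coeff_map_poly i0 f_inv_into_f[OF assms])
  thus ?thesis by metis
qed

end


definition Hh :: "nat \<Rightarrow> 'a::comm_ring_1 poly \<Rightarrow> 'a poly \<Rightarrow> 'a poly \<Rightarrow> 'a poly" where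
  "Hh d P G F = (\<Sum>i\<le>d. smult (coeff P i) (F ^ i * G ^ (d - i)))"

lemma frak_p_Hh: "frak_p P G F = Hh (degree P) P G F"
  unfolding frak_p_def Hh_def ..

lemma Hh_add: "Hh d (P1 + P2) G F = Hh d P1 G F + Hh d P2 G F"
  unfolding Hh_def by (simp add: smult_add_left sum.distrib)

lemma Hh_diff: "Hh d (P1 - P2) G F = Hh d P1 G F - Hh d P2 G F"
  unfolding Hh_def by (simp add: smult_diff_left sum_subtractf)

lemma Hh_smult: "Hh d (smult c P) G F = smult c (Hh d P G F)"
  unfolding Hh_def by (simp add: smult_sum2)

lemma Hh_pCons0: "Hh (Suc d) (pCons 0 P) G F = F * Hh d P G F"
  unfolding Hh_def
  by (subst sum.atMost_Suc_shift) (simp add: sum_distrib_left mult_ac)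

lemma Hh_Suc:
  assumes "degree P \<le> d"
  shows "Hh (Suc d) P G F = G * Hh d P G F"
proof -
  have "Hh (Suc d) P G F = (\<Sum>i\<le>d. smult (coeff P i) (F ^ i * G ^ (Suc d - i)))"
    unfolding Hh_def using assms by (simp add: coeff_eq_0)
  also have "\<dots> = (\<Sum>i\<le>d. G * smult (coeff P i) (F ^ i * G ^ (d - i)))"
    by (intro sum.cong refl) (simp add: Suc_diff_le mult_ac)
  finally show ?thesis unfolding Hh_def by (simp add: sum_distrib_left)
qed

lemma Hh_lin:
  assumes "degree P \<le> d"
  shows "Hh (Suc d) ([:-c,1:] * P) G F = (F - smult c G) * Hh d P G F"
proof -
  have "[:-c,1:] * P = pCons 0 P + smult (-c) P"
    by (simp add: mult_pCons_left)
  hence "Hh (Suc d) ([:-c,1:] * P) G F = F * Hh d P G F + smult (-c) (G * Hh d P G F)"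
    by (simp add: Hh_add Hh_diff Hh_smult Hh_pCons0 Hh_Suc[OF assms])
  thus ?thesis by (simp add: algebra_simps)
qed

lemma degree_lin_prod: "degree (\<Prod>k<n. [:- (c k), 1:] :: 'a::idom poly) = n"
  by (subst degree_prod_eq_sum_degree) auto

lemma frak_p_prod:
  fixes c :: "nat \<Rightarrow> 'a::idom"
  shows "frak_p (\<Prod>k<n. [:- c k, 1:]) G F = (\<Prod>k<n. F - smult (c k) G)"
proof (induction n)
  case 0
  show ?case by (simp add: frak_p_def)
next
  case (Suc n)
  have "frak_p (\<Prod>k<Suc n. [:- c k, 1:]) G F
      = Hh (Suc n) ([:- c n, 1:] * (\<Prod>k<n. [:- c k, 1:])) G F"
    unfolding frak_p_Hh degree_lin_prod by (simp add: mult.commute)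
  also have "\<dots> = (F - smult (c n) G) * Hh n (\<Prod>k<n. [:- c k, 1:]) G F"
    by (rule Hh_lin) (simp add: degree_lin_prod)
  also have "Hh n (\<Prod>k<n. [:- c k, 1:]) G F = frak_p (\<Prod>k<n. [:- c k, 1:]) G F"
    unfolding frak_p_Hh degree_lin_prod ..
  finally show ?case using Suc by (simp add: mult.commute)
qed

lemma map_frak_p:
  assumes "field_hom (\<phi> :: 'a::field \<Rightarrow> 'b::field)"
  shows "map_poly \<phi> (frak_p q g f) = frak_p (map_poly \<phi> q) (map_poly \<phi> g) (map_poly \<phi> f)"
proof -
  interpret phi: field_hom \<phi> by (rule assms)
  interpret phip: map_poly_inj_idom_hom \<phi> ..
  show ?thesis unfolding frak_p_def
    by (simp only: phip.hom_sum phi.map_poly_hom_smult phip.hom_mult phip.hom_power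
          phi.degree_map_poly_hom phi.coeff_map_poly_hom)
qed


lemma map_poly_hom_prod:
  assumes "field_hom (h::'a::field \<Rightarrow> 'b::field)"
  shows "map_poly h (\<Prod>i\<in>A. P i) = (\<Prod>i\<in>A. map_poly h (P i))"
proof -
  interpret field_hom h by (rule assms)
  interpret hp: map_poly_idom_hom h ..
  show ?thesis by (rule hp.hom_prod)
qed
lemma map_poly_hom_mult:
  assumes "field_hom (h::'a::field \<Rightarrow> 'b::field)"
  shows "map_poly h (P * Q) = map_poly h P * map_poly h Q"
proof -
  interpret field_hom h by (rule assms)
  interpret hp: map_poly_idom_hom h ..
  show ?thesis by (rule hp.hom_mult)
qed

lemma map_poly_hom_poly:
  assumes "field_hom (h::'a::field \<Rightarrow> 'b::field)"
  shows "poly (map_poly h P) (h x) = h (poly P x)"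
proof -
  interpret field_hom h by (rule assms)
  show ?thesis by (rule poly_map_poly)
qed

lemma map_poly_hom_lin:
  assumes "field_hom (h::'a::field \<Rightarrow> 'b::field)"
  shows "map_poly h [:- y, 1:] = [:- h y, 1:]"
proof -
  interpret field_hom h by (rule assms)
  show ?thesis by (simp add: map_poly_pCons_hom hom_uminus)
qed

definition bez :: "'a::comm_ring_1 \<Rightarrow> 'a \<Rightarrow> bool" where
  "bez a b \<longleftrightarrow> (\<exists>u v. u * a + v * b = 1)"

lemma poly_bezout_ex:
  fixes p q :: "'a::field poly"
  shows "\<exists>u v d. u * p + v * q = d \<and> d dvd p \<and> d dvd q"
proof (induction "euclidean_size q" arbitrary: p q rule: less_induct)
  case less
  show ?case
  proof (cases "q = 0")
    case True
    then show ?thesis by (intro exI[of _ 1] exI[of _ 0] exI[of _ p]) simp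
  next
    case False
    have "euclidean_size (p mod q) < euclidean_size q" using False by (rule mod_size_less)
    from less[OF this, of q] obtain u v d
      where uv: "u * q + v * (p mod q) = d" "d dvd q" "d dvd p mod q" by blast
    have pm: "p mod q = p - (p div q) * q" by (simp add: minus_div_mult_eq_mod)
    have "v * p + (u - v * (p div q)) * q = d" using uv(1) unfolding pm by (simp add: algebra_simps)
    moreover have "d dvd p"
    proof -
      have "p = (p div q) * q + p mod q" by simp
      moreover have "d dvd (p div q) * q + p mod q" by (rule dvd_add[OF dvd_mult[OF uv(2)] uv(3)])
      ultimately show ?thesis by simp
    qed
    ultimately show ?thesis using uv(2) by blast
  qed
qed

lemma bez_unit:
  assumes "u * p + v * q = d" "is_unit d"
  shows "bez p q"
proof -
  from assms(2) obtain k where k: "1 = d * k" by (elim dvdE)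
  have "(k * u) * p + (k * v) * q = k * (u * p + v * q)" by (simp add: algebra_simps)
  also have "\<dots> = d * k" using assms(1) by (simp add: mult.commute)
  finally have "(k * u) * p + (k * v) * q = 1" using k by simp
  thus ?thesis unfolding bez_def by blast
qed

lemma bez_of_coprime:
  fixes p q :: "'a::field poly"
  assumes "coprime p q" shows "bez p q"
proof -
  obtain u v d where uvd: "u * p + v * q = d" "d dvd p" "d dvd q" using poly_bezout_ex by blast
  have "is_unit d" using coprime_common_divisor[OF assms uvd(2,3)] .
  thus ?thesis using bez_unit[OF uvd(1)] by blast
qed

lemma irr_bez:
  fixes q M :: "'a::field poly"
  assumes irr: "irreducible q" and nd: "\<not> q dvd M"
  shows "bez q M"
proof -
  obtain u v d where uvd: "u * q + v * M = d" "d dvd q" "d dvd M" using poly_bezout_ex by blast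
  from uvd(2) obtain e where e: "q = d * e" by (elim dvdE)
  have "is_unit d \<or> is_unit e" using irreducibleD[OF irr e] .
  moreover have "\<not> is_unit e"
  proof
    assume "is_unit e"
    then obtain e' where e': "1 = e * e'" by (elim dvdE)
    have "d = q * e'" by (simp add: e mult.assoc flip: e')
    hence "q dvd d" by simp
    hence "q dvd M" using uvd(3) by (rule dvd_trans)
    thus False using nd by simp
  qed
  ultimately have "is_unit d" by blast
  thus ?thesis using bez_unit[OF uvd(1)] by blast
qed

lemma irr_prime_dvd:
  fixes h A B :: "'a::field poly"
  assumes irr: "irreducible h" and d: "h dvd A * B"
  shows "h dvd A \<or> h dvd B"
proof (cases "h dvd A")
  case False
  then obtain u v where uv: "u * h + v * A = 1" using irr_bez[OF irr] unfolding bez_def by blast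
  have "B = u * h * B + v * (A * B)" using arg_cong[OF uv, of "\<lambda>x. x * B"] by (simp add: algebra_simps)
  moreover have "h dvd u * h * B + v * (A * B)" using d by simp
  ultimately show ?thesis by simp
qed simp

lemma bez_mult_dvd:
  assumes "bez a b" "a dvd c" "b dvd c"
  shows "a * b dvd (c :: 'a::comm_ring_1)"
proof -
  obtain u v where uv: "u * a + v * b = 1" using assms(1) unfolding bez_def by blast
  obtain c1 where c1: "c = a * c1" using assms(2) by (elim dvdE)
  obtain c2 where c2: "c = b * c2" using assms(3) by (elim dvdE)
  have "c = u * a * c + v * b * c" using arg_cong[OF uv, of "\<lambda>x. x * c"] by (simp add: algebra_simps)
  also have "\<dots> = (a * b) * (u * c2 + v * c1)"
    by (subst (1) c2, subst c1) (simp add: algebra_simps)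
  finally show ?thesis by (rule dvdI)
qed

lemma bez_mult_right:
  assumes "bez a b1" "bez a b2"
  shows "bez a (b1 * (b2 :: 'a::comm_ring_1))"
proof -
  obtain u1 v1 where 1: "u1 * a + v1 * b1 = 1" using assms(1) unfolding bez_def by blast
  obtain u2 v2 where 2: "u2 * a + v2 * b2 = 1" using assms(2) unfolding bez_def by blast
  have "(u1 * a + v1 * b1) * (u2 * a + v2 * b2) = 1" using 1 2 by simp
  hence "(u1 * u2 * a + u1 * v2 * b2 + v1 * b1 * u2) * a + (v1 * v2) * (b1 * b2) = 1"
    by (simp add: algebra_simps)
  thus ?thesis unfolding bez_def by blast
qed

lemma bez_prod_right:
  assumes "\<And>i. i \<in> I \<Longrightarrow> bez a (B i)"
  shows "bez a (\<Prod>i\<in>I. B i :: 'a::comm_ring_1)"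
  using assms
proof (induction I rule: infinite_finite_induct)
  case (infinite A) thus ?case unfolding bez_def by (intro exI[of _ 0] exI[of _ 1]) simp
next
  case empty thus ?case unfolding bez_def by (intro exI[of _ 0] exI[of _ 1]) simp
next
  case (insert x F) thus ?case by (simp add: bez_mult_right)
qed

lemma bez_hb:
  fixes F G :: "'b::field poly"
  assumes "bez F G" "\<beta> \<noteq> \<gamma>"
  shows "bez (F - smult \<beta> G) (F - smult \<gamma> G)"
proof -
  obtain u v where uv: "u * F + v * G = 1" using assms(1) unfolding bez_def by blast
  define k where "k = \<gamma> - \<beta>"
  have k: "k \<noteq> 0" using assms(2) unfolding k_def by simp
  have e1: "(F - smult \<beta> G) - (F - smult \<gamma> G) = smult k G"
    unfolding k_def by (simp add: algebra_simps smult_diff_left)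
  have e2: "smult \<gamma> (F - smult \<beta> G) - smult \<beta> (F - smult \<gamma> G) = smult k F"
    unfolding k_def by (simp add: algebra_simps smult_diff_left smult_diff_right)
  have "u * smult k F + v * smult k G = smult k (u * F + v * G)" by (simp add: smult_add_right)
  hence "smult k 1 = u * smult k F + v * smult k G" using uv by simp
  also have "\<dots> = (smult \<gamma> u + v) * (F - smult \<beta> G) + (- (smult \<beta> u + v)) * (F - smult \<gamma> G)"
    unfolding e1[symmetric] e2[symmetric] by (simp add: algebra_simps smult_diff_right smult_add_right)
  finally have "smult k 1 = (smult \<gamma> u + v) * (F - smult \<beta> G) + (- (smult \<beta> u + v)) * (F - smult \<gamma> G)" .
  hence "smult (inverse k) (smult k 1) = smult (inverse k) ((smult \<gamma> u + v) * (F - smult \<beta> G) + (- (smult \<beta> u + v)) * (F - smult \<gamma> G))"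
    by simp
  also have "\<dots> = smult (inverse k) ((smult \<gamma> u + v) * (F - smult \<beta> G)) + smult (inverse k) ((- (smult \<beta> u + v)) * (F - smult \<gamma> G))"
    by (rule smult_add_right)
  also have "\<dots> = smult (inverse k) (smult \<gamma> u + v) * (F - smult \<beta> G) + smult (inverse k) (- (smult \<beta> u + v)) * (F - smult \<gamma> G)"
    by (simp only: mult_smult_left)
  finally have fin: "smult (inverse k) (smult k 1) = smult (inverse k) (smult \<gamma> u + v) * (F - smult \<beta> G) + smult (inverse k) (- (smult \<beta> u + v)) * (F - smult \<gamma> G)" .
  have one: "smult (inverse k) (smult k 1) = (1 :: 'b poly)" using k by simp
  from fin[unfolded one] have "1 = smult (inverse k) (smult \<gamma> u + v) * (F - smult \<beta> G) + smult (inverse k) (- (smult \<beta> u + v)) * (F - smult \<gamma> G)" .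
  thus ?thesis unfolding bez_def by (intro exI) (rule sym)
qed


lemma field_hom_uminus:
  assumes "field_hom (h::'a::field \<Rightarrow> 'b::field)" shows "h (- x) = - h x"
proof -
  interpret field_hom h by (rule assms)
  show ?thesis by (rule hom_uminus)
qed

lemma field_hom_degree:
  assumes "field_hom (h::'a::field \<Rightarrow> 'b::field)" shows "degree (map_poly h p) = degree p"
proof -
  interpret field_hom h by (rule assms)
  show ?thesis by (rule degree_map_poly_hom)
qed

lemma field_hom_map_eq0:
  assumes "field_hom (h::'a::field \<Rightarrow> 'b::field)" shows "map_poly h p = 0 \<longleftrightarrow> p = 0"
proof -
  interpret field_hom h by (rule assms)
  interpret hp: map_poly_inj_idom_hom h ..
  show ?thesis by (rule hp.hom_0_iff)
qed

lemma field_hom_map_inj: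
  assumes "field_hom (h::'a::field \<Rightarrow> 'b::field)" "map_poly h p = map_poly h p'" shows "p = p'"
proof -
  interpret field_hom h by (rule assms)
  interpret hp: map_poly_inj_idom_hom h ..
  show ?thesis using assms(2) by (rule hp.injectivity)
qed

lemma map_poly_hom_diff_smult:
  assumes "field_hom (h::'a::field \<Rightarrow> 'b::field)"
  shows "map_poly h (P - smult c Q) = map_poly h P - smult (h c) (map_poly h Q)"
proof -
  interpret field_hom h by (rule assms)
  interpret hp: map_poly_inj_idom_hom h ..
  show ?thesis by (simp only: hp.hom_minus map_poly_hom_smult)
qed

lemma map_poly_hom_bez:
  assumes "field_hom (h::'a::field \<Rightarrow> 'b::field)" "bez P Q"
  shows "bez (map_poly h P) (map_poly h Q)"
proof -
  interpret field_hom h by (rule assms)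
  interpret hp: map_poly_inj_idom_hom h ..
  obtain u v where "u * P + v * Q = 1" using assms(2) unfolding bez_def by blast
  hence "map_poly h (u * P + v * Q) = 1" by simp
  hence "map_poly h u * map_poly h P + map_poly h v * map_poly h Q = 1"
    by (simp only: hp.hom_add hp.hom_mult)
  thus ?thesis unfolding bez_def by blast
qed

lemma map_poly_hom_dvd:
  assumes "field_hom (h::'a::field \<Rightarrow> 'b::field)" "P dvd Q"
  shows "map_poly h P dvd map_poly h Q"
proof -
  interpret field_hom h by (rule assms)
  interpret hp: map_poly_inj_idom_hom h ..
  show ?thesis using assms(2) by (rule hp.hom_dvd)
qed

lemma field_embedding_hom:
  assumes "field_embedding (h::'a::field \<Rightarrow> 'b::field)" shows "field_hom h"
proof -
  have add: "h (x + y) = h x + h y" and mult: "h (x * y) = h x * h y" and one: "h 1 = 1" for x y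
    using assms unfolding field_embedding_def by auto
  have "h 0 = h 0 + h 0" using add[of 0 0] by simp
  hence zero: "h 0 = 0" by (metis add.right_neutral add_left_cancel)
  show ?thesis by unfold_locales (simp_all add: add mult one zero)
qed

lemma bez_sym: "bez a b \<Longrightarrow> bez b a"
  unfolding bez_def by (metis add.commute)

lemma prod_dvd_pairwise_bez:
  fixes D :: "nat \<Rightarrow> 'a::comm_ring_1"
  assumes "\<And>k. k < n \<Longrightarrow> D k dvd X" "\<And>i j. i < j \<Longrightarrow> j < n \<Longrightarrow> bez (D j) (D i)"
  shows "(\<Prod>k<n. D k) dvd X"
  using assms
proof (induction n)
  case 0 thus ?case by simp
next
  case (Suc n)
  have IH: "(\<Prod>k<n. D k) dvd X" using Suc by simp
  have "bez (D n) (\<Prod>k<n. D k)" by (rule bez_prod_right) (use Suc.prems(2) in auto)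
  hence "bez (\<Prod>k<n. D k) (D n)" by (rule bez_sym)
  hence "(\<Prod>k<n. D k) * D n dvd X" using IH Suc.prems(1) by (intro bez_mult_dvd) auto
  thus ?case by simp
qed

lemma field_hom_inj:
  assumes "field_hom (h :: 'a::field \<Rightarrow> 'b::field)" "h x = h y" shows "x = y"
proof -
  interpret field_hom h by (rule assms)
  show ?thesis using assms(2) injectivity by blast
qed

context
  fixes \<phi> :: "'a::{field,finite} \<Rightarrow> 'b::field" and q :: "'a poly" and \<alpha> :: 'b
  assumes hom: "field_hom \<phi>" and irr: "irreducible q" and monic: "lead_coeff q = 1"
    and root: "poly (map_poly \<phi> q) \<alpha> = 0"
begin

interpretation phi: field_hom \<phi> by (rule hom)
interpretation phip: map_poly_inj_idom_hom \<phi> ..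

lemma Fr_comp: "((x::'b) ^ (CARD('a) ^ k)) ^ (CARD('a) ^ j) = x ^ (CARD('a) ^ (j + k))"
  unfolding power_mult[symmetric] power_add[symmetric] by (simp add: add.commute)

lemma Fr0: "(x::'b) ^ (CARD('a) ^ 0) = x" by simp

lemma Fr_zero: "(0::'b) ^ (CARD('a) ^ k) = 0" by simp

lemma map_Fr_phi: "map_poly (\<lambda>x::'b. x ^ (CARD('a) ^ k)) (map_poly \<phi> P) = map_poly \<phi> P"
  by (rule poly_eqI) (simp add: coeff_map_poly F_fix[OF hom])

lemma q_nz: "q \<noteq> 0" using irr not_irreducible_zero by metis

lemma phiq_nz: "map_poly \<phi> q \<noteq> 0" using q_nz by simp

lemma deg_q_pos: "degree q > 0"
  using irreducible_not_unit[OF irr] is_unit_iff_degree[OF q_nz] q_nz by simp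

lemma Fr_root:
  assumes "poly (map_poly \<phi> q) \<beta> = 0"
  shows "poly (map_poly \<phi> q) (\<beta> ^ (CARD('a) ^ k)) = 0"
proof -
  have "poly (map_poly (\<lambda>x::'b. x ^ (CARD('a) ^ k)) (map_poly \<phi> q)) (\<beta> ^ (CARD('a) ^ k))
        = (poly (map_poly \<phi> q) \<beta>) ^ (CARD('a) ^ k)"
    by (rule map_poly_hom_poly[OF F_hom[OF hom]])
  thus ?thesis using assms by (simp add: map_Fr_phi)
qed

lemma Fr_inj: "(x::'b) ^ (CARD('a) ^ k) = y ^ (CARD('a) ^ k) \<Longrightarrow> x = y"
  using field_hom_inj[OF F_hom[OF hom, of k]] by blast

lemma exists_period: "\<exists>r>0. \<alpha> ^ (CARD('a) ^ r) = \<alpha>"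
proof -
  define R where "R = {x. poly (map_poly \<phi> q) x = 0}"
  have finR: "finite R" unfolding R_def using poly_roots_finite[OF phiq_nz] .
  define N where "N = card R"
  define fk where "fk = (\<lambda>k. \<alpha> ^ (CARD('a) ^ k))"
  have sub: "fk ` {..N} \<subseteq> R" unfolding R_def fk_def using Fr_root[OF root] by auto
  have "\<not> inj_on fk {..N}"
  proof
    assume "inj_on fk {..N}"
    hence "card (fk ` {..N}) = Suc N" by (simp add: card_image)
    moreover have "card (fk ` {..N}) \<le> N" using card_mono[OF finR sub] N_def by simp
    ultimately show False by simp
  qed
  then obtain i j where ij: "i \<noteq> j" "fk i = fk j" unfolding inj_on_def by blast
  have "\<exists>i j. i < j \<and> fk i = fk j"
    using ij by (metis linorder_neqE_nat)
  then obtain i j where ij: "i < j" "fk i = fk j" by blast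
  have "(\<alpha> ^ (CARD('a) ^ (j - i))) ^ (CARD('a) ^ i) = \<alpha> ^ (CARD('a) ^ i)"
    using ij unfolding fk_def Fr_comp by simp
  hence "\<alpha> ^ (CARD('a) ^ (j - i)) = \<alpha>" by (rule Fr_inj)
  thus ?thesis using ij(1) by (intro exI[of _ "j - i"]) auto
qed

lemma map_Fr_lin: "map_poly (\<lambda>x::'b. x ^ (CARD('a) ^ k)) [:- y, 1:] = [:- (y ^ (CARD('a) ^ k)), 1:]"
  by (rule map_poly_hom_lin[OF F_hom[OF hom]])

lemma map_Fr_prod: "map_poly (\<lambda>x::'b. x ^ (CARD('a) ^ k)) (\<Prod>i\<in>A. P i) = (\<Prod>i\<in>A. map_poly (\<lambda>x::'b. x ^ (CARD('a) ^ k)) (P i))"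
  by (rule map_poly_hom_prod[OF F_hom[OF hom]])

lemma prod_shift:
  fixes G :: "nat \<Rightarrow> 'c::idom"
  assumes "G r = G 0" "G 0 \<noteq> 0"
  shows "(\<Prod>k<r. G (Suc k)) = (\<Prod>k<r. G k)"
proof -
  have "G 0 * (\<Prod>k<r. G (Suc k)) = (\<Prod>k<Suc r. G k)" by (rule prod.lessThan_Suc_shift[symmetric])
  also have "\<dots> = (\<Prod>k<r. G k) * G 0" using assms by simp
  finally show ?thesis using assms(2) by (simp add: mult.commute)
qed

lemma q_split_aux:
  "map_poly \<phi> q = (\<Prod>k<degree q. [:- (\<alpha> ^ (CARD('a) ^ k)), 1:]) \<and>
   \<alpha> ^ (CARD('a) ^ degree q) = \<alpha> \<and>
   (\<forall>i j. i < j \<and> j < degree q \<longrightarrow> \<alpha> ^ (CARD('a) ^ i) \<noteq> \<alpha> ^ (CARD('a) ^ j))"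
proof -
  define r where "r = (LEAST r. 0 < r \<and> \<alpha> ^ (CARD('a) ^ r) = \<alpha>)"
  have r: "0 < r" "\<alpha> ^ (CARD('a) ^ r) = \<alpha>"
    using LeastI_ex[OF exists_period] unfolding r_def by auto
  have rmin: "\<alpha> ^ (CARD('a) ^ s) \<noteq> \<alpha>" if "0 < s" "s < r" for s
    using not_less_Least[of s "\<lambda>r. 0 < r \<and> \<alpha> ^ (CARD('a) ^ r) = \<alpha>"] that unfolding r_def by auto
  have dist: "\<alpha> ^ (CARD('a) ^ i) \<noteq> \<alpha> ^ (CARD('a) ^ j)" if "i < j" "j < r" for i j
  proof
    assume "\<alpha> ^ (CARD('a) ^ i) = \<alpha> ^ (CARD('a) ^ j)"
    hence "(\<alpha> ^ (CARD('a) ^ (j - i))) ^ (CARD('a) ^ i) = \<alpha> ^ (CARD('a) ^ i)"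
      using that unfolding Fr_comp by simp
    hence "\<alpha> ^ (CARD('a) ^ (j - i)) = \<alpha>" by (rule Fr_inj)
    thus False using rmin[of "j - i"] that by auto
  qed
  define M where "M = (\<Prod>k<r. [:- (\<alpha> ^ (CARD('a) ^ k)), 1:])"
  have degM: "degree M = r" unfolding M_def by (rule degree_lin_prod)
  have "map_poly (\<lambda>x::'b. x ^ (CARD('a) ^ 1)) M = (\<Prod>k<r. [:- (\<alpha> ^ (CARD('a) ^ Suc k)), 1:])"
    unfolding M_def map_Fr_prod map_Fr_lin Fr_comp by simp
  also have "\<dots> = M" unfolding M_def
    by (rule prod_shift[where G = "\<lambda>k. [:- (\<alpha> ^ (CARD('a) ^ k)), 1:]"]) (use r in auto)
  finally have Mfix: "map_poly (\<lambda>x::'b. x ^ (CARD('a) ^ 1)) M = M" .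
  have "coeff M i \<in> range \<phi>" for i
  proof (rule fixed_range[OF hom])
    have "coeff (map_poly (\<lambda>x::'b. x ^ (CARD('a) ^ 1)) M) i = coeff M i" using Mfix by simp
    thus "coeff M i ^ CARD('a) = coeff M i" by (simp add: coeff_map_poly)
  qed
  from lift_poly[OF hom this] obtain M' where M': "M = map_poly \<phi> M'" by (elim exE)
  have degM': "degree M' = r" using degM M' by simp
  have "M' \<noteq> 0" using degM' r by auto
  have qdvd: "q dvd M'"
  proof (rule ccontr)
    assume "\<not> q dvd M'"
    then obtain u v where "u * q + v * M' = 1"
      using irr_bez[OF irr] unfolding bez_def by blast
    hence "map_poly \<phi> (u * q + v * M') = 1" by simp
    hence "map_poly \<phi> u * map_poly \<phi> q + map_poly \<phi> v * M = 1" using M' by (simp add: hom_distribs)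
    hence "poly (map_poly \<phi> u * map_poly \<phi> q + map_poly \<phi> v * M) \<alpha> = 1" by simp
    moreover have "poly M \<alpha> = 0" unfolding M_def poly_prod using r(1)
      by (subst prod_zero_iff) (auto intro!: bexI[of _ 0])
    ultimately show False using root by simp
  qed
  hence le1: "degree q \<le> r" using dvd_imp_degree_le[OF qdvd \<open>M' \<noteq> 0\<close>] degM' by simp
  have sub: "(\<lambda>k. \<alpha> ^ (CARD('a) ^ k)) ` {..<r} \<subseteq> {x. poly (map_poly \<phi> q) x = 0}"
    using Fr_root[OF root] by auto
  have inj: "inj_on (\<lambda>k. \<alpha> ^ (CARD('a) ^ k)) {..<r}"
  proof (rule inj_onI)
    fix i j assume "i \<in> {..<r}" "j \<in> {..<r}" "\<alpha> ^ (CARD('a) ^ i) = \<alpha> ^ (CARD('a) ^ j)"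
    thus "i = j" using dist[of i j] dist[of j i] by (cases i j rule: linorder_cases) auto
  qed
  have "r = card ((\<lambda>k. \<alpha> ^ (CARD('a) ^ k)) ` {..<r})" using card_image[OF inj] by simp
  also have "\<dots> \<le> card {x. poly (map_poly \<phi> q) x = 0}"
    by (rule card_mono[OF poly_roots_finite[OF phiq_nz] sub])
  also have "\<dots> \<le> degree q" using card_poly_roots_bound[OF phiq_nz] by simp
  finally have rq: "r = degree q" using le1 by simp
  obtain c where c: "M' = q * c" using qdvd by blast
  have "c \<noteq> 0" using c \<open>M' \<noteq> 0\<close> by auto
  have "degree c = 0" using c degM' rq q_nz \<open>c \<noteq> 0\<close> by (simp add: degree_mult_eq)
  have "lead_coeff M = 1" unfolding M_def by (simp add: lead_coeff_prod)
  hence "\<phi> (lead_coeff M') = \<phi> 1" using M' by simp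
  hence "lead_coeff M' = 1" by (rule phi.injectivity)
  hence "lead_coeff c = 1" using c monic by (simp add: lead_coeff_mult)
  hence "coeff c 0 = 1" using \<open>degree c = 0\<close> by simp
  moreover have "c = [:coeff c 0:]" by (rule degree_0_id[OF \<open>degree c = 0\<close>, symmetric])
  ultimately have "c = 1" by (simp add: one_pCons)
  hence "map_poly \<phi> q = M" using M' c by simp
  thus ?thesis using r(2) dist unfolding M_def rq[symmetric] by blast
qed


lemma q_split: "map_poly \<phi> q = (\<Prod>k<degree q. [:- (\<alpha> ^ (CARD('a) ^ k)), 1:])"
  using q_split_aux by blast

lemma alpha_period: "\<alpha> ^ (CARD('a) ^ degree q) = \<alpha>"
  using q_split_aux by blast

lemma alpha_dist: "i < j \<Longrightarrow> j < degree q \<Longrightarrow> \<alpha> ^ (CARD('a) ^ i) \<noteq> \<alpha> ^ (CARD('a) ^ j)"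
  using q_split_aux by blast

lemma roots_fixed:
  assumes "poly (map_poly \<phi> q) \<beta> = 0"
  shows "\<beta> ^ (CARD('a) ^ degree q) = \<beta>"
proof -
  have "(\<Prod>k<degree q. \<beta> - \<alpha> ^ (CARD('a) ^ k)) = 0"
    using assms unfolding q_split poly_prod by simp
  then obtain k where k: "k < degree q" "\<beta> = \<alpha> ^ (CARD('a) ^ k)"
    by (subst (asm) prod_zero_iff) auto
  have "\<beta> ^ (CARD('a) ^ degree q) = \<alpha> ^ (CARD('a) ^ (degree q + k))"
    unfolding k(2) Fr_comp ..
  also have "\<dots> = (\<alpha> ^ (CARD('a) ^ degree q)) ^ (CARD('a) ^ k)"
    unfolding Fr_comp by (simp add: add.commute)
  also have "\<dots> = \<beta>" unfolding alpha_period k(2) ..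
  finally show ?thesis .
qed

lemma all_fixed:
  assumes spl: "is_splitting_field \<phi> q"
  shows "(x::'b) ^ (CARD('a) ^ degree q) = x"
proof -
  define K where "K = {x::'b. x ^ (CARD('a) ^ degree q) = x}"
  have "is_subfield K"
    unfolding is_subfield_def K_def
    by (simp add: F_add[OF hom] power_mult_distrib field_hom_uminus[OF F_hom[OF hom]] power_inverse)
  moreover have "range \<phi> \<subseteq> K" unfolding K_def using F_fix[OF hom] by auto
  moreover have "{x. poly (map_poly \<phi> q) x = 0} \<subseteq> K" unfolding K_def using roots_fixed by auto
  ultimately have "K = UNIV" using spl unfolding is_splitting_field_def by blast
  thus ?thesis unfolding K_def by auto
qed

definition normF :: "nat \<Rightarrow> nat \<Rightarrow> 'c::field poly \<Rightarrow> 'c poly" where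
  "normF c m A = (\<Prod>k<m. map_poly (\<lambda>x. x ^ (c ^ k)) A)"

lemma normF_mult: "normF CARD('a) m (A * B :: 'b poly) = normF CARD('a) m A * normF CARD('a) m B"
  unfolding normF_def map_poly_hom_mult[OF F_hom[OF hom]] by (rule prod.distrib)

lemma normF_deg:
  assumes "A \<noteq> 0"
  shows "degree (normF CARD('a) m (A :: 'b poly)) = m * degree A"
proof -
  have "degree (normF CARD('a) m A) = (\<Sum>k<m. degree (map_poly (\<lambda>x::'b. x ^ (CARD('a) ^ k)) A))"
    unfolding normF_def
    by (rule degree_prod_eq_sum_degree) (use assms field_hom_map_eq0[OF F_hom[OF hom]] in auto)
  also have "\<dots> = m * degree A" by (simp add: field_hom_degree[OF F_hom[OF hom]])
  finally show ?thesis .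
qed

lemma normF_zero: "m > 0 \<Longrightarrow> normF CARD('a) m (0 :: 'b poly) = 0"
  unfolding normF_def by (simp add: prod_zero_iff)

context
  fixes f g :: "'a poly"
  assumes cop: "coprime f g" and spl: "is_splitting_field \<phi> q"
begin

lemma map_Fr_id: "map_poly (\<lambda>x::'b. x ^ (CARD('a) ^ degree q)) A = A"
  by (rule map_poly_idI) (simp add: all_fixed[OF spl])

lemma map_Fr_comp:
  "map_poly (\<lambda>x::'b. x ^ (CARD('a) ^ 1)) (map_poly (\<lambda>x::'b. x ^ (CARD('a) ^ k)) A)
     = map_poly (\<lambda>x::'b. x ^ (CARD('a) ^ Suc k)) A"
proof -
  have "map_poly (\<lambda>x::'b. x ^ (CARD('a) ^ 1)) (map_poly (\<lambda>x::'b. x ^ (CARD('a) ^ k)) A)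
     = map_poly ((\<lambda>x::'b. x ^ (CARD('a) ^ 1)) \<circ> (\<lambda>x::'b. x ^ (CARD('a) ^ k))) A"
    by (rule map_poly_map_poly) simp
  also have "(\<lambda>x::'b. x ^ (CARD('a) ^ 1)) \<circ> (\<lambda>x::'b. x ^ (CARD('a) ^ k)) = (\<lambda>x::'b. x ^ (CARD('a) ^ Suc k))"
    by (rule ext) (simp only: o_def Fr_comp, simp)
  finally show ?thesis .
qed

lemma normF_fix: "map_poly (\<lambda>x::'b. x ^ (CARD('a) ^ 1)) (normF CARD('a) (degree q) A) = normF CARD('a) (degree q) A"
proof (cases "A = 0")
  case True
  thus ?thesis using normF_zero deg_q_pos by simp
next
  case False
  have "map_poly (\<lambda>x::'b. x ^ (CARD('a) ^ 1)) (normF CARD('a) (degree q) A)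
      = (\<Prod>k<degree q. map_poly (\<lambda>x::'b. x ^ (CARD('a) ^ Suc k)) A)"
    unfolding normF_def map_Fr_prod map_Fr_comp ..
  also have "\<dots> = normF CARD('a) (degree q) A" unfolding normF_def
    by (rule prod_shift[where G = "\<lambda>k. map_poly (\<lambda>x::'b. x ^ (CARD('a) ^ k)) A"])
       (use False in \<open>simp_all add: map_Fr_id\<close>)
  finally show ?thesis .
qed

lemma normF_lift: "\<exists>A'. normF CARD('a) (degree q) A = map_poly \<phi> A'"
proof (rule lift_poly[OF hom])
  fix i
  show "coeff (normF CARD('a) (degree q) A) i \<in> range \<phi>"
  proof (rule fixed_range[OF hom])
    have "coeff (map_poly (\<lambda>x::'b. x ^ (CARD('a) ^ 1)) (normF CARD('a) (degree q) A)) i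
        = coeff (normF CARD('a) (degree q) A) i" by (simp only: normF_fix)
    thus "coeff (normF CARD('a) (degree q) A) i ^ CARD('a) = coeff (normF CARD('a) (degree q) A) i"
      by (simp add: coeff_map_poly)
  qed
qed

definition hb :: "'b \<Rightarrow> 'b poly" where
  "hb \<beta> = map_poly \<phi> f - smult \<beta> (map_poly \<phi> g)"

lemma map_Fr_hb: "map_poly (\<lambda>x::'b. x ^ (CARD('a) ^ k)) (hb \<beta>) = hb (\<beta> ^ (CARD('a) ^ k))"
  unfolding hb_def map_poly_hom_diff_smult[OF F_hom[OF hom]] map_Fr_phi ..

lemma phiQ: "map_poly \<phi> (frak_p q g f) = normF CARD('a) (degree q) (hb \<alpha>)"
proof -
  have "map_poly \<phi> (frak_p q g f) = frak_p (map_poly \<phi> q) (map_poly \<phi> g) (map_poly \<phi> f)"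
    by (rule map_frak_p[OF hom])
  also have "\<dots> = (\<Prod>k<degree q. map_poly \<phi> f - smult (\<alpha> ^ (CARD('a) ^ k)) (map_poly \<phi> g))"
    unfolding q_split by (rule frak_p_prod)
  also have "\<dots> = normF CARD('a) (degree q) (hb \<alpha>)"
    unfolding normF_def map_Fr_hb by (simp add: hb_def)
  finally show ?thesis .
qed

lemma bez_fg: "bez (map_poly \<phi> f) (map_poly \<phi> g)"
  by (rule map_poly_hom_bez[OF hom bez_of_coprime[OF cop]])

lemma bez_hb_dist: "\<beta> \<noteq> \<gamma> \<Longrightarrow> bez (hb \<beta>) (hb \<gamma>)"
  unfolding hb_def by (rule bez_hb[OF bez_fg])

lemma main_equiv:
  assumes Q0: "frak_p q g f \<noteq> 0"
  shows "irreducible (frak_p q g f) \<longleftrightarrow> irreducible (hb \<alpha>)"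
proof -
  define m where "m = degree q"
  define Q where "Q = frak_p q g f"
  define h where "h = hb \<alpha>"
  have m0: "m > 0" unfolding m_def by (rule deg_q_pos)
  have phiQ': "map_poly \<phi> Q = normF CARD('a) m h" unfolding Q_def m_def h_def by (rule phiQ)
  have degQ: "degree Q = m * degree h" if "h \<noteq> 0"
    using normF_deg[OF that, of m] phiQ' field_hom_degree[OF hom, of Q] by simp
  show ?thesis unfolding Q_def[symmetric] h_def[symmetric]
  proof
    assume irrQ: "irreducible Q"
    have h0: "h \<noteq> 0"
    proof
      assume "h = 0"
      hence "map_poly \<phi> Q = 0" using phiQ' normF_zero[OF m0] by simp
      thus False using Q0 field_hom_map_eq0[OF hom] unfolding Q_def by blast
    qed
    have hu: "\<not> is_unit h"
    proof
      assume "is_unit h"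
      hence "degree h = 0" using is_unit_iff_degree[OF h0] by simp
      hence "degree Q = 0" using degQ[OF h0] by simp
      hence "is_unit Q" using is_unit_iff_degree Q0 unfolding Q_def by blast
      thus False using irrQ irreducible_not_unit by blast
    qed
    show "irreducible h"
    proof (rule irreducibleI[OF h0 hu])
      fix A B assume hAB: "h = A * B"
      show "is_unit A \<or> is_unit B"
      proof (rule ccontr)
        assume nu: "\<not> (is_unit A \<or> is_unit B)"
        have A0: "A \<noteq> 0" and B0: "B \<noteq> 0" using h0 hAB by auto
        have dA: "degree A > 0" using nu is_unit_iff_degree[OF A0] by auto
        obtain A' where A': "normF CARD('a) m A = map_poly \<phi> A'" using normF_lift unfolding m_def by blast
        obtain B' where B': "normF CARD('a) m B = map_poly \<phi> B'" using normF_lift unfolding m_def by blast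
        have "map_poly \<phi> Q = map_poly \<phi> (A' * B')"
          using phiQ' hAB normF_mult A' B' map_poly_hom_mult[OF hom] by simp
        hence QAB: "Q = A' * B'" by (rule field_hom_map_inj[OF hom])
        have "degree A' = m * degree A"
          using normF_deg[OF A0, of m] A' field_hom_degree[OF hom, of A'] by simp
        hence "degree A' > 0" using m0 dA by simp
        hence "\<not> is_unit A'" by (metis is_unit_iff_degree less_not_refl3 degree_0)
        moreover have "degree B' = m * degree B"
          using normF_deg[OF B0, of m] B' field_hom_degree[OF hom, of B'] by simp
        hence "degree B' > 0" using m0 nu is_unit_iff_degree[OF B0] by auto
        hence "\<not> is_unit B'" by (metis is_unit_iff_degree less_not_refl3 degree_0)
        ultimately show False using irreducibleD[OF irrQ QAB] by blast
      qed
    qed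
  next
    assume irrh: "irreducible h"
    have h0: "h \<noteq> 0" using irrh by auto
    have "degree h > 0" using irreducible_not_unit[OF irrh] is_unit_iff_degree[OF h0] by auto
    hence dQ: "degree Q > 0" using degQ[OF h0] m0 by simp
    have Qnu: "\<not> is_unit Q"
      using dQ is_unit_iff_degree Q0 unfolding Q_def by auto
    show "irreducible Q"
    proof (rule irreducibleI)
      show "Q \<noteq> 0" using Q0 unfolding Q_def .
      show "\<not> is_unit Q" by (rule Qnu)
      fix A B assume QAB: "Q = A * B"
      show "is_unit A \<or> is_unit B"
      proof (rule ccontr)
        assume nu: "\<not> (is_unit A \<or> is_unit B)"
        have A0: "A \<noteq> 0" and B0: "B \<noteq> 0" using Q0 QAB unfolding Q_def by auto
        have dA: "degree A > 0" using nu is_unit_iff_degree[OF A0] by auto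
        have dB: "degree B > 0" using nu is_unit_iff_degree[OF B0] by auto
        have key: "degree Q \<le> degree C" if hC: "h dvd map_poly \<phi> C" and C0: "C \<noteq> 0" for C
        proof -
          have "(\<Prod>k<m. map_poly (\<lambda>x::'b. x ^ (CARD('a) ^ k)) h) dvd map_poly \<phi> C"
          proof (rule prod_dvd_pairwise_bez)
            fix k assume "k < m"
            have "map_poly (\<lambda>x::'b. x ^ (CARD('a) ^ k)) h dvd map_poly (\<lambda>x::'b. x ^ (CARD('a) ^ k)) (map_poly \<phi> C)"
              using hC by (rule map_poly_hom_dvd[OF F_hom[OF hom]])
            thus "map_poly (\<lambda>x::'b. x ^ (CARD('a) ^ k)) h dvd map_poly \<phi> C" by (simp only: map_Fr_phi)
          next
            fix i j assume "i < j" "j < m"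
            hence "\<alpha> ^ (CARD('a) ^ j) \<noteq> \<alpha> ^ (CARD('a) ^ i)" using alpha_dist unfolding m_def by metis
            thus "bez (map_poly (\<lambda>x::'b. x ^ (CARD('a) ^ j)) h) (map_poly (\<lambda>x::'b. x ^ (CARD('a) ^ i)) h)"
              unfolding h_def map_Fr_hb by (rule bez_hb_dist)
          qed
          hence "map_poly \<phi> Q dvd map_poly \<phi> C" using phiQ' unfolding normF_def by simp
          hence "degree (map_poly \<phi> Q) \<le> degree (map_poly \<phi> C)"
            by (rule dvd_imp_degree_le) (use C0 field_hom_map_eq0[OF hom] in blast)
          thus ?thesis by (simp add: field_hom_degree[OF hom])
        qed
        have "h dvd map_poly \<phi> Q"
          unfolding phiQ' normF_def
          by (rule dvd_prod_eqI[where a = 0]) (simp_all add: m0)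
        hence "h dvd map_poly \<phi> A * map_poly \<phi> B"
          using QAB map_poly_hom_mult[OF hom] by simp
        hence "h dvd map_poly \<phi> A \<or> h dvd map_poly \<phi> B" by (rule irr_prime_dvd[OF irrh])
        hence "degree Q \<le> degree A \<or> degree Q \<le> degree B" using key A0 B0 by blast
        moreover have "degree Q = degree A + degree B" using QAB A0 B0 by (simp add: degree_mult_eq)
        ultimately show False using dA dB by linarith
      qed
    qed
  qed
qed

lemma main_equiv':
  assumes Q0: "frak_p q g f \<noteq> 0"
  shows "irreducible (frak_p q g f) \<longleftrightarrow> irreducible (map_poly \<phi> f - smult \<alpha> (map_poly \<phi> g))"
  using main_equiv[OF Q0] unfolding hb_def .

end

end

theorem mainTheorem5:
  fixes f g q :: "'a::{field,finite} poly"
    and \<phi> :: "'a \<Rightarrow> 'b::field"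
    and \<alpha> :: 'b
  assumes "coprime f g"
    and "lead_coeff q = 1" and "irreducible q"
    and "frak_p q g f \<noteq> 0"
    and "is_splitting_field \<phi> q"
    and "poly (map_poly \<phi> q) \<alpha> = 0"
  shows "irreducible (frak_p q g f) \<longleftrightarrow> irreducible (map_poly \<phi> f - smult \<alpha> (map_poly \<phi> g))"
proof -
  have hom: "field_hom \<phi>"
    using assms(5) field_embedding_hom unfolding is_splitting_field_def by blast
  show ?thesis
    by (rule main_equiv'[OF hom assms(3) assms(2) assms(6) assms(1) assms(5) assms(4)])
qed

end
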